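(* Let $g$ be a bounded, non-constant completely monotonic function on $(0,\infty)$. Then for all $x,y>0$, $$g(x)<\frac{(y/x)^y}{\Gamma(y)}\int_0^\infty g(t)\,t^{y-1}e^{-ty/x}\,dt.$$ *)

theory Defs
  imports "HOL-Analysis.Analysis"
begin

text \<open>A function g is completely monotonic on (0,infinity) if it is infinitely
  differentiable there and (-1)^n g^(n)(x) >= 0 for all n and all x > 0.
  Higher derivatives are iterated deriv; since (0,infinity) is open,
  they only depend on the values of g on (0,infinity).\<close>
definition completely_monotonic :: "(real \<Rightarrow> real) \<Rightarrow> bool" where
  "completely_monotonic g \<longleftrightarrow>
     (\<forall>n::nat. \<forall>x>0. ((deriv ^^ n) g) differentiable (at x)
                      \<and> (-1) ^ n * (deriv ^^ n) g x \<ge> 0)"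

end

theory Submission
  imports Defs
begin

lemma cm_facts:
  assumes "completely_monotonic g" "t > 0"
  shows "(g has_real_derivative deriv g t) (at t)"
    "(deriv g has_real_derivative deriv (deriv g) t) (at t)"
    "deriv (deriv g) t \<ge> 0"
proof -
  have A: "\<And>n. ((deriv ^^ n) g) differentiable (at t) \<and> (-1) ^ n * (deriv ^^ n) g t \<ge> 0"
    using assms unfolding completely_monotonic_def by blast
  show "(g has_real_derivative deriv g t) (at t)"
    using A[of 0] by (simp add: DERIV_deriv_iff_real_differentiable)
  show "(deriv g has_real_derivative deriv (deriv g) t) (at t)"
    using A[of 1] by (simp add: DERIV_deriv_iff_real_differentiable)
  show "deriv (deriv g) t \<ge> 0"
    using A[of 2] by (simp add: numeral_2_eq_2)
qed

lemma cm_deriv_mono: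
  assumes "completely_monotonic g" "a > 0" "a \<le> b"
  shows "deriv g a \<le> deriv g b"
proof (cases "a = b")
  case False
  then have "a < b" using assms by simp
  from MVT2[OF this, of "deriv g" "deriv (deriv g)"] obtain z where
    "a < z" "z < b" "deriv g b - deriv g a = (b - a) * deriv (deriv g) z"
    using cm_facts(2)[OF assms(1)] assms(2) by force
  moreover have "deriv (deriv g) z \<ge> 0" using cm_facts(3)[OF assms(1)] \<open>a < z\<close> assms(2) by simp
  moreover have "(b - a) * deriv (deriv g) z \<ge> 0" using calculation \<open>a < b\<close> by simp
  ultimately show ?thesis by linarith
qed simp

lemma cm_tangent:
  assumes "completely_monotonic g" "x > 0" "t > 0"
  shows "g x + deriv g x * (t - x) \<le> g t"
proof -
  consider "x < t" | "x = t" | "t < x" by linarith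
  then show ?thesis
  proof cases
    case 1
    from MVT2[OF this, of g "deriv g"] obtain z where
      "x < z" "z < t" "g t - g x = (t - x) * deriv g z"
      using cm_facts(1)[OF assms(1)] assms(2) by force
    moreover have "deriv g x \<le> deriv g z" using cm_deriv_mono[OF assms(1,2)] \<open>x < z\<close> by simp
    moreover have "(t - x) * deriv g x \<le> (t - x) * deriv g z"
      using calculation 1 by (intro mult_left_mono) auto
    ultimately show ?thesis by (simp add: algebra_simps)
  next
    case 3
    from MVT2[OF this, of g "deriv g"] obtain z where
      "t < z" "z < x" "g x - g t = (x - t) * deriv g z"
      using cm_facts(1)[OF assms(1)] assms(3) by force
    moreover have "deriv g z \<le> deriv g x" using cm_deriv_mono[OF assms(1)] \<open>t < z\<close> \<open>z < x\<close> assms(3) by simp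
    moreover have "(x - t) * deriv g z \<le> (x - t) * deriv g x"
      using calculation 3 by (intro mult_left_mono) auto
    ultimately show ?thesis by (simp add: algebra_simps)
  qed simp
qed

lemma gamma_hbi:
  fixes s c :: real assumes s: "s > 0" and c: "c > 0"
  shows "has_bochner_integral lborel
           (\<lambda>t. indicator {0<..} t * (t powr (s - 1) * exp (- (c * t)))) (Gamma s / c powr s)"
proof -
  define F where "F = (\<lambda>t::real. indicator {0..} t * t powr (s - 1) / exp t)"
  have Fm: "F \<in> borel_measurable lborel" unfolding F_def by measurable
  have "has_bochner_integral lborel F (Gamma s)"
    apply (rule has_bochner_integral_nn_integral[OF Fm])
    using Gamma_conv_nn_integral_real[OF s] Gamma_real_pos[OF s]
    by (auto simp: F_def indicator_def)
  then have "has_bochner_integral lborel (\<lambda>t. F (0 + c * t)) (Gamma s /\<^sub>R \<bar>c\<bar>)"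
    using lborel_has_bochner_integral_real_affine_iff[of c F "Gamma s" 0] c by simp
  then have "has_bochner_integral lborel (\<lambda>t. F (0 + c * t) / c powr (s - 1)) ((Gamma s /\<^sub>R \<bar>c\<bar>) / c powr (s - 1))"
    by (rule has_bochner_integral_divide_zero)
  moreover have "F (0 + c * t) / c powr (s - 1) = indicator {0<..} t * (t powr (s - 1) * exp (- (c * t)))" for t
    using c by (auto simp: F_def indicator_def powr_mult exp_minus field_simps zero_le_mult_iff)
  moreover have "(Gamma s /\<^sub>R \<bar>c\<bar>) / c powr (s - 1) = Gamma s / c powr s"
    using c by (simp add: powr_diff field_simps)
  ultimately show ?thesis by simp
qed

theorem corollary2p6:
  fixes g :: "real \<Rightarrow> real" and x y :: real
  assumes "completely_monotonic g"
    and "bounded (g ` {0<..})"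
    and "\<exists>a>0. \<exists>b>0. g a \<noteq> g b"
    and "x > 0" and "y > 0"
  shows "g x < (y / x) powr y / Gamma y *
           (LBINT t:{0<..}. g t * t powr (y - 1) * exp (- t * y / x))"
proof -
  note cm = assms(1)
  define c where "c = y / x"
  have c: "c > 0" using assms by (simp add: c_def)
  define G where "G = g x"
  define D where "D = deriv g x"
  define W where "W = (\<lambda>t. indicator {0<..} t * (t powr (y - 1) * exp (- (c * t))) :: real)"
  define K where "K = c powr y / Gamma y"
  have Gy: "Gamma y > 0" using assms Gamma_real_pos by blast
  have K: "K > 0" unfolding K_def using c Gy by simp
  have Wnn: "W t \<ge> 0" for t unfolding W_def by (simp add: indicator_def)
  have hW: "has_bochner_integral lborel W (Gamma y / c powr y)"
    unfolding W_def using gamma_hbi[OF assms(5) c] .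
  have g1: "Gamma (y + 1) = y * Gamma y"
    by (rule Gamma_plus1) (use assms(5) in \<open>auto elim!: nonpos_Ints_cases\<close>)
  have hW1: "has_bochner_integral lborel (\<lambda>t. t * W t) (x * (Gamma y / c powr y))"
  proof -
    have "has_bochner_integral lborel (\<lambda>t. indicator {0<..} t * (t powr ((y + 1) - 1) * exp (- (c * t))))
           (Gamma (y + 1) / c powr (y + 1))"
      using gamma_hbi[of "y + 1" c] assms c by simp
    moreover have "indicator {0<..} t * (t powr ((y + 1) - 1) * exp (- (c * t))) = t * W t" for t
      by (cases "t > 0") (auto simp: W_def indicator_def powr_mult_base)
    moreover have "Gamma (y + 1) / c powr (y + 1) = x * (Gamma y / c powr y)"
      using g1 c assms by (simp add: powr_add c_def field_simps)
    ultimately show ?thesis by simp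
  qed
  obtain B where B: "B > 0" "\<And>t. t > 0 \<Longrightarrow> \<bar>g t\<bar> \<le> B"
    using assms(2) unfolding bounded_pos by force
  have gcont: "isCont g t" if "t > 0" for t
    using cm_facts(1)[OF cm that] DERIV_isCont by blast
  have gcon: "continuous_on {0<..} g"
    using gcont by (intro continuous_at_imp_continuous_on) auto
  define GW where "GW = (\<lambda>t. g t * W t)"
  have GWm: "GW \<in> borel_measurable lborel"
  proof -
    have "(\<lambda>t. indicator {0<..} t *\<^sub>R g t) \<in> borel_measurable borel"
      by (rule borel_measurable_continuous_on_indicator[OF _ gcon]) simp
    moreover have "(\<lambda>t::real. t powr (y - 1) * exp (- (c * t))) \<in> borel_measurable borel"
      by measurable
    ultimately have "(\<lambda>t. (indicator {0<..} t *\<^sub>R g t) * (t powr (y - 1) * exp (- (c * t)))) \<in> borel_measurable borel"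
      by (rule borel_measurable_times)
    moreover have "(\<lambda>t. (indicator {0<..} t *\<^sub>R g t) * (t powr (y - 1) * exp (- (c * t)))) = GW"
      by (auto simp: GW_def W_def indicator_def fun_eq_iff)
    ultimately show ?thesis by simp
  qed
  have GWi: "integrable lborel GW"
  proof (rule Bochner_Integration.integrable_bound[OF _ GWm])
    show "integrable lborel (\<lambda>t. B * W t)" using hW by (auto simp: has_bochner_integral_iff)
    show "AE t in lborel. norm (GW t) \<le> norm (B * W t)"
    proof (rule AE_I2)
      fix t :: real
      show "norm (GW t) \<le> norm (B * W t)"
      proof (cases "t > 0")
        case True
        then show ?thesis using B(1) B(2)[OF True] Wnn[of t]
          by (simp add: GW_def abs_mult mult_right_mono)
      next
        case False
        then show ?thesis by (simp add: GW_def W_def)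
      qed
    qed
  qed
  define I where "I = integral\<^sup>L lborel GW"
  have hGW: "has_bochner_integral lborel GW I"
    unfolding I_def using GWi by (rule has_bochner_integral_integrable)
  have LB: "(LBINT t:{0<..}. g t * t powr (y - 1) * exp (- t * y / x)) = I"
    unfolding I_def set_lebesgue_integral_def
    by (intro Bochner_Integration.integral_cong) 
       (auto simp: GW_def W_def indicator_def c_def)
  define h where "h = (\<lambda>t. g t - G - D * (t - x))"
  have hnn: "h t \<ge> 0" if "t > 0" for t
    using cm_tangent[OF cm assms(4) that] by (simp add: h_def G_def D_def)
  define H where "H = (\<lambda>t. h t * W t)"
  have Hnn: "H t \<ge> 0" for t
    by (cases "t > 0") (auto simp: H_def W_def intro!: mult_nonneg_nonneg hnn)
  have "has_bochner_integral lborel (\<lambda>t. GW t - G * W t - D * (t * W t - x * W t))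
          (I - G * (Gamma y / c powr y) - D * (x * (Gamma y / c powr y) - x * (Gamma y / c powr y)))"
    by (intro has_bochner_integral_diff has_bochner_integral_mult_right hGW hW hW1)
  moreover have "(\<lambda>t. GW t - G * W t - D * (t * W t - x * W t)) = H"
    by (auto simp: fun_eq_iff GW_def H_def h_def algebra_simps)
  ultimately have hH: "has_bochner_integral lborel H (I - G * (Gamma y / c powr y))" by simp
  have Hi: "integrable lborel H" using hH by (auto simp: has_bochner_integral_iff)
  have Hint: "integral\<^sup>L lborel H = I - G * (Gamma y / c powr y)" using hH by (auto simp: has_bochner_integral_iff)
  have Hpos: "integral\<^sup>L lborel H > 0"
  proof (cases "\<exists>t0>0. h t0 > 0")
    case True
    then obtain t0 where t0: "t0 > 0" "h t0 > 0" by blast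
    define Q where "Q = (\<lambda>t. h t * (t powr (y - 1) * exp (- (c * t))))"
    define v where "v = Q t0"
    have v: "v > 0" using t0 by (simp add: v_def Q_def)
    have "isCont Q t0"
      unfolding Q_def h_def using gcont[OF t0(1)] t0(1)
      by (intro continuous_intros) auto
    then obtain d where d: "d > 0" "\<And>t. dist t t0 < d \<Longrightarrow> dist (Q t) (Q t0) < v / 2"
      unfolding continuous_at_eps_delta using v by (metis half_gt_zero)
    define e where "e = min d t0 / 2"
    have e: "e > 0" "e < d" "e < t0" using d t0 by (auto simp: e_def)
    have le: "v / 2 * indicator {t0 - e..t0 + e} t \<le> H t" for t
    proof (cases "t \<in> {t0 - e..t0 + e}")
      case True
      then have tp: "t > 0" and "dist t t0 < d" using e by (auto simp: dist_real_def)
      then have "dist (Q t) v < v / 2" using d(2) by (simp add: v_def)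
      then have "Q t > v / 2" unfolding dist_real_def by arith
      moreover have "H t = Q t" using tp by (simp add: H_def Q_def W_def)
      ultimately show ?thesis using True by simp
    next
      case False
      then show ?thesis using Hnn[of t] by simp
    qed
    have "integral\<^sup>L lborel (\<lambda>t. v / 2 * indicator {t0 - e..t0 + e} t) \<le> integral\<^sup>L lborel H"
      by (rule integral_mono[OF _ Hi le]) (rule integrable_mult_right, simp add: integrable_indicator_iff emeasure_lborel_Icc_eq)
    moreover have "integral\<^sup>L lborel (\<lambda>t. v / 2 * indicator {t0 - e..t0 + e} t :: real) = v / 2 * (2 * e)"
      using e by simp
    moreover have "v / 2 * (2 * e) > 0" using v e by simp
    ultimately show ?thesis by linarith
  next
    case False
    then have h0: "h t = 0" if "t > 0" for t using hnn[OF that] that by force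
    have D0: "D = 0"
    proof (rule ccontr)
      assume "D \<noteq> 0"
      define t where "t = x + (B + \<bar>G\<bar> + 1) / \<bar>D\<bar>"
      have tp: "t > 0" using assms(4) B(1) \<open>D \<noteq> 0\<close> by (simp add: t_def add_pos_nonneg)
      have "\<bar>D * (t - x)\<bar> = B + \<bar>G\<bar> + 1"
        using \<open>D \<noteq> 0\<close> B(1) by (simp add: t_def abs_mult)
      moreover have "g t = G + D * (t - x)" using h0[OF tp] by (simp add: h_def)
      moreover have "\<bar>g t\<bar> \<le> B" using B(2)[OF tp] .
      ultimately show False by linarith
    qed
    have "g t = G" if "t > 0" for t using h0[OF that] D0 by (simp add: h_def)
    with assms(3) show ?thesis by auto
  qed
  have "(y / x) powr y / Gamma y * I = K * I" by (simp add: K_def c_def)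
  also have "K * I = G + K * integral\<^sup>L lborel H"
    using Hint K Gy c by (simp add: K_def field_simps)
  also have "\<dots> > G" using K Hpos by simp
  finally show ?thesis unfolding LB G_def by simp
qed

end
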